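(* Let $\omega\in\mathbb{R}^d$ be rationally independent, let $U:\mathbb{T}^d\to Gl(n,\mathbb{C})$ be continuous and let $B\in\mathcal{M}(n,\mathbb{C})$ be in Jordan normal form with $\partial_\omega U=BU-U\bar B$. Then every $x\in\sigma(B)$ is linked to some $y\in\sigma(B)$. Moreover, for every $\alpha\in\sigma(B)$, if the chain-linked equivalence class $[\alpha]\subseteq\sigma(B)$ contains no loop of odd length, then there is a partition $[\alpha]=\Sigma_1\cup\Sigma_2$ such that every element of $\Sigma_1$ is linked to every element of $\Sigma_2$, and the sum of the algebraic multiplicities of the eigenvalues in $\Sigma_1$ equals the sum of the algebraic multiplicities of the eigenvalues in $\Sigma_2$.
   Context: $\mathbb{T}^d=\mathbb{R}^d/\mathbb{Z}^d$; rationally independent: $\langle k,\omega\rangle\ne0$ for $k\in\mathbb{Z}^d\setminus\{0\}$. $\partial_\omega U(\theta)=\frac{d}{dt}U(\theta+t\omega)|_{t=0}$; $\bar B$ entrywise conjugate. Let $\mathcal{M}=\{2i\pi\langle k,\omega\rangle:k\in\mathbb{Z}^d\}$. Two complex numbers $\alpha,\beta$ are linked if $\alpha-\bar\beta\in\mathcal{M}$. A chain of length $k-1$ is a sequence $\alpha_{i_1},\dots,\alpha_{i_k}$ with $\alpha_{i_j}$ linked to $\alpha_{i_{j+1}}$ for all $j$; it is a loop of length $k-1$ if moreover $k\ge2$ and $\alpha_{i_k}=\alpha_{i_1}$. Two numbers are chain-linked if there is a chain between them; on $\sigma(B)$ (given the first conclusion) this is an equivalence relation, and $[\alpha]$ denotes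 the class of $\alpha$. *)

theory Defs
  imports "HOL-Analysis.Analysis" "Jordan_Normal_Form.Jordan_Normal_Form"
begin

text \<open>Points of \<real>^d are functions 'd \<Rightarrow> real on a finite index type 'd (product topology);
  functions on the torus T^d are Z^d-periodic functions on \<real>^d.\<close>

definition rat_indep :: "('d::finite \<Rightarrow> real) \<Rightarrow> bool" where
  "rat_indep \<omega> \<longleftrightarrow> (\<forall>k::'d \<Rightarrow> int. k \<noteq> (\<lambda>_. 0) \<longrightarrow> (\<Sum>i\<in>UNIV. of_int (k i) * \<omega> i) \<noteq> 0)"

definition Mset :: "('d::finite \<Rightarrow> real) \<Rightarrow> complex set" where
  "Mset \<omega> = {2 * \<i> * complex_of_real pi * complex_of_real (\<Sum>i\<in>UNIV. of_int (k i) * \<omega> i) | k :: 'd \<Rightarrow> int. True}"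

definition linked :: "('d::finite \<Rightarrow> real) \<Rightarrow> complex \<Rightarrow> complex \<Rightarrow> bool" where
  "linked \<omega> a b \<longleftrightarrow> a - cnj b \<in> Mset \<omega>"

text \<open>A chain of length (length xs - 1): consecutive entries are linked.\<close>
definition is_chain :: "('d::finite \<Rightarrow> real) \<Rightarrow> complex list \<Rightarrow> bool" where
  "is_chain \<omega> xs \<longleftrightarrow> xs \<noteq> [] \<and> (\<forall>j. Suc j < length xs \<longrightarrow> linked \<omega> (xs ! j) (xs ! Suc j))"

definition is_loop :: "('d::finite \<Rightarrow> real) \<Rightarrow> complex list \<Rightarrow> bool" where
  "is_loop \<omega> xs \<longleftrightarrow> is_chain \<omega> xs \<and> length xs \<ge> 2 \<and> last xs = hd xs"

definition chain_linked :: "('d::finite \<Rightarrow> real) \<Rightarrow> complex set \<Rightarrow> complex \<Rightarrow> complex \<Rightarrow> bool" where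
  "chain_linked \<omega> S a b \<longleftrightarrow> (\<exists>xs. is_chain \<omega> xs \<and> set xs \<subseteq> S \<and> hd xs = a \<and> last xs = b)"

definition spectrum :: "complex mat \<Rightarrow> complex set" where
  "spectrum B = {a. eigenvalue B a}"

definition alg_mult :: "complex mat \<Rightarrow> complex \<Rightarrow> nat" where
  "alg_mult B a = order a (char_poly B)"

definition chain_class :: "('d::finite \<Rightarrow> real) \<Rightarrow> complex mat \<Rightarrow> complex \<Rightarrow> complex set" where
  "chain_class \<omega> B a = {b \<in> spectrum B. chain_linked \<omega> (spectrum B) a b}"

definition in_jordan_nf :: "complex mat \<Rightarrow> bool" where
  "in_jordan_nf B \<longleftrightarrow> (\<exists>n_as. 0 \<notin> fst ` set n_as \<and> B = jordan_matrix n_as)"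

end

theory Submission
  imports Defs
begin

no_notation vec_index (infixl "$" 100)

lemma rat_indep_inj:
  assumes "rat_indep (\<omega>::'d::finite \<Rightarrow> real)"
  shows "inj \<omega>"
proof (rule injI, rule ccontr)
  fix i j assume eq: "\<omega> i = \<omega> j" and ne: "i \<noteq> j"
  define k :: "'d \<Rightarrow> int" where "k = (\<lambda>l. if l = i then 1 else if l = j then -1 else 0)"
  have "k \<noteq> (\<lambda>_. 0)" using ne by (auto simp: k_def fun_eq_iff)
  moreover have "(\<Sum>l\<in>UNIV. of_int (k l) * \<omega> l) = 0"
  proof -
    have "\<And>l. of_int (k l) * \<omega> l = (if l = i then \<omega> i else 0) + (if l = j then - \<omega> j else 0)"
      using ne by (auto simp: k_def)
    then have "(\<Sum>l\<in>UNIV. of_int (k l) * \<omega> l) = (\<Sum>l\<in>UNIV. (if l = i then \<omega> i else 0)) + (\<Sum>l\<in>UNIV. (if l = j then - \<omega> j else 0))"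
      by (simp add: sum.distrib)
    also have "\<dots> = 0" using eq by simp
    finally show ?thesis .
  qed
  ultimately show False using assms unfolding rat_indep_def by blast
qed

lemma kronecker_d:
  fixes \<omega> \<alpha> :: "'d::finite \<Rightarrow> real"
  assumes indep: "rat_indep \<omega>" and eps: "\<epsilon> > 0"
  shows "\<exists>t (h::'d \<Rightarrow> int). \<forall>i. \<bar>t * \<omega> i - of_int (h i) - \<alpha> i\<bar> < \<epsilon>"
proof -
  define N where "N = card (UNIV::'d set)"
  obtain e where e: "bij_betw e {0..<N} (UNIV::'d set)"
    using ex_bij_betw_nat_finite[of "UNIV::'d set"] unfolding N_def by auto
  have injw: "inj \<omega>" by (rule rat_indep_inj[OF indep])
  define \<theta> where "\<theta> = (\<lambda>j. \<omega> (e j))"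
  have injt: "inj_on \<theta> {..<N}"
    using e injw unfolding \<theta>_def bij_betw_def inj_on_def by (auto simp: lessThan_atLeast0)
  have "\<theta> ` {..<N} = \<omega> ` (e ` {0..<N})" by (auto simp: \<theta>_def lessThan_atLeast0)
  then have rng: "\<theta> ` {..<N} = range \<omega>"
    using e by (simp add: bij_betw_def)
  have modI: "Modules.module (\<lambda>r. (*) (real_of_int r))"
    by (simp add: Modules.module.intro distrib_left mult.commute)
  have ind: "module.independent (\<lambda>r. (*) (real_of_int r)) (\<theta> ` {..<N})"
  proof
    assume "module.dependent (\<lambda>r. (*) (real_of_int r)) (\<theta> ` {..<N})"
    then have "\<exists>T u. finite T \<and> T \<subseteq> range \<omega> \<and> (\<Sum>v\<in>T. real_of_int (u v) * v) = 0 \<and> (\<exists>v\<in>T. u v \<noteq> 0)"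
      unfolding Modules.module.dependent_explicit[OF modI] rng by simp
    then obtain T u where TT: "finite T \<and> T \<subseteq> range \<omega> \<and> (\<Sum>v\<in>T. real_of_int (u v) * v) = 0 \<and> (\<exists>v\<in>T. u v \<noteq> 0)"
      by blast
    have T: "finite T" "T \<subseteq> range \<omega>" "(\<Sum>v\<in>T. real_of_int (u v) * v) = 0" and v: "\<exists>v\<in>T. u v \<noteq> 0"
      using TT by auto
    define k where "k = (\<lambda>l. if \<omega> l \<in> T then u (\<omega> l) else 0)"
    have "k \<noteq> (\<lambda>_. 0)" using v T(2) by (auto simp: k_def fun_eq_iff)
    moreover have "(\<Sum>l\<in>UNIV. of_int (k l) * \<omega> l) = 0"
    proof -
      have "(\<Sum>l\<in>UNIV. of_int (k l) * \<omega> l) = (\<Sum>l\<in>UNIV. if \<omega> l \<in> T then real_of_int (u (\<omega> l)) * \<omega> l else 0)"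
        by (rule sum.cong) (auto simp: k_def)
      also have "\<dots> = (\<Sum>l\<in>{l\<in>UNIV. \<omega> l \<in> T}. real_of_int (u (\<omega> l)) * \<omega> l)"
        by (rule sum.inter_filter[symmetric]) simp
      also have "\<dots> = (\<Sum>v\<in>\<omega> ` {l. \<omega> l \<in> T}. real_of_int (u v) * v)"
        using sum.reindex[OF inj_on_subset[OF injw], of "{l. \<omega> l \<in> T}" "\<lambda>v. real_of_int (u v) * v"]
        by (simp add: o_def)
      also have "\<omega> ` {l. \<omega> l \<in> T} = T" using T(2) by auto
      finally show ?thesis using T(3) by simp
    qed
    ultimately show False using indep unfolding rat_indep_def by blast
  qed
  obtain t h where th: "\<And>j. j < N \<Longrightarrow> \<bar>t * \<theta> j - of_int (h j) - (\<alpha> \<circ> e) j\<bar> < \<epsilon>"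
    using Kronecker_thm_1[OF ind injt eps, of "\<alpha> \<circ> e"] by blast
  define h' where "h' = (\<lambda>l. h (inv_into {0..<N} e l))"
  have "\<forall>l. \<bar>t * \<omega> l - of_int (h' l) - \<alpha> l\<bar> < \<epsilon>"
  proof
    fix l
    let ?j = "inv_into {0..<N} e l"
    have j: "?j < N" "e ?j = l"
    proof -
      have "l \<in> e ` {0..<N}" using e by (simp add: bij_betw_def)
      show "?j < N" using inv_into_into[OF \<open>l \<in> e ` {0..<N}\<close>] by simp
      show "e ?j = l" using f_inv_into_f[OF \<open>l \<in> e ` {0..<N}\<close>] .
    qed
    show "\<bar>t * \<omega> l - of_int (h' l) - \<alpha> l\<bar> < \<epsilon>"
      using th[OF j(1)] j(2) unfolding h'_def \<theta>_def by simp
  qed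
  then show ?thesis by blast
qed

lemma exp1_const:
  fixes g :: "'a::topological_space \<Rightarrow> complex"
  assumes "connected S" "continuous_on S g" "\<And>x. x \<in> S \<Longrightarrow> exp (g x) = 1" "a \<in> S" "x \<in> S"
  shows "g x = g a"
proof -
  have "g constant_on S"
  proof (rule continuous_discrete_range_constant[OF assms(1,2)])
    fix x assume x: "x \<in> S"
    show "\<exists>e>0. \<forall>y. y \<in> S \<and> g y \<noteq> g x \<longrightarrow> e \<le> norm (g y - g x)"
    proof (intro exI[of _ "2*pi"] conjI allI impI)
      show "0 < 2 * pi" by simp
      fix y assume y: "y \<in> S \<and> g y \<noteq> g x"
      obtain m where m: "Re (g x) = 0" "Im (g x) = of_int (2*m) * pi" using assms(3)[OF x] exp_eq_1 by blast
      obtain n where n: "Re (g y) = 0" "Im (g y) = of_int (2*n) * pi" using assms(3) y exp_eq_1 by blast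
      have "n \<noteq> m" using m n y by (metis complex_eqI)
      then have "1 \<le> \<bar>real_of_int (n - m)\<bar>" by linarith
      have eq: "g y - g x = \<i> * complex_of_real (2 * pi * of_int (n - m))"
        using m n by (simp add: complex_eq_iff algebra_simps)
      have "norm (g y - g x) = norm (complex_of_real (2 * pi * of_int (n - m)))"
        unfolding eq by (simp only: norm_mult norm_ii mult_1_left)
      also have "\<dots> = 2 * pi * \<bar>real_of_int (n - m)\<bar>"
        by (simp only: norm_of_real abs_mult) simp
      finally have "norm (g y - g x) = 2 * pi * \<bar>real_of_int (n - m)\<bar>" .
      also have "\<dots> \<ge> 2 * pi * 1"
        using \<open>1 \<le> _\<close> by (intro mult_left_mono) auto
      finally show "2 * pi \<le> norm (g y - g x)" by simp
    qed
  qed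
  then show ?thesis using assms(4,5) unfolding constant_on_def by auto
qed

lemma axis_per_int:
  fixes g :: "real^'d::finite \<Rightarrow> 'b"
  assumes per: "\<And>v i. g (v + axis i 1) = g v"
  shows "(\<And>i. z$i \<in> \<int>) \<Longrightarrow> g (v + z) = g v"
proof -
  assume z: "\<And>i. z$i \<in> \<int>"
  have nat: "g (v + real m *\<^sub>R axis i 1) = g v" for v i m
  proof (induction m arbitrary: v)
    case (Suc m)
    have eq: "v + real (Suc m) *\<^sub>R axis i 1 = (v + real m *\<^sub>R axis i 1) + axis i 1"
      by (simp add: algebra_simps)
    have "g (v + real (Suc m) *\<^sub>R axis i 1) = g ((v + real m *\<^sub>R axis i 1) + axis i 1)"
      by (rule arg_cong[OF eq])
    also have "\<dots> = g (v + real m *\<^sub>R axis i 1)" by (rule per)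
    also have "\<dots> = g v" by (rule Suc.IH)
    finally show ?case .
  qed simp
  have int: "g (v + of_int m *\<^sub>R axis i 1) = g v" for v i m
  proof (cases "m \<ge> 0")
    case True
    then have "m = int (nat m)" by simp
    then obtain n where "m = int n" by blast
    then show ?thesis using nat[of v n i] by simp
  next
    case False
    then have "m = - int (nat (-m))" by simp
    then obtain n where mn: "m = - int n" by blast
    have e2: "v = (v + of_int m *\<^sub>R axis i 1) + real n *\<^sub>R axis i 1"
      unfolding mn by simp
    have "g v = g ((v + of_int m *\<^sub>R axis i 1) + real n *\<^sub>R axis i 1)"
      by (rule arg_cong[OF e2])
    also have "\<dots> = g (v + of_int m *\<^sub>R axis i 1)" by (rule nat)
    finally show ?thesis by simp
  qed
  define k where "k = (\<lambda>i. \<lfloor>z$i\<rfloor>)"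
  have zk: "z$i = of_int (k i)" for i
  proof -
    obtain r where r: "z$i = of_int r" using z[of i] by (auto elim: Ints_cases)
    then show ?thesis unfolding k_def by simp
  qed
  have fin: "g (v + (\<Sum>i\<in>S. of_int (k i) *\<^sub>R axis i 1)) = g v" if "finite S" for S v
    using that
  proof (induction S arbitrary: v rule: finite_induct)
    case (insert x F)
    have eq: "v + (\<Sum>i\<in>insert x F. of_int (k i) *\<^sub>R axis i 1) = (v + of_int (k x) *\<^sub>R axis x 1) + (\<Sum>i\<in>F. of_int (k i) *\<^sub>R axis i 1)"
      by (simp add: sum.insert[OF insert(1,2)] add.assoc)
    have "g (v + (\<Sum>i\<in>insert x F. of_int (k i) *\<^sub>R axis i 1)) = g ((v + of_int (k x) *\<^sub>R axis x 1) + (\<Sum>i\<in>F. of_int (k i) *\<^sub>R axis i 1))"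
      by (rule arg_cong[OF eq])
    also have "\<dots> = g (v + of_int (k x) *\<^sub>R axis x 1)" by (rule insert.IH)
    also have "\<dots> = g v" by (rule int)
    finally show ?case .
  qed simp
  have comp: "(\<Sum>i\<in>UNIV. of_int (k i) *\<^sub>R axis i (1::real)) $ j = z $ j" for j
  proof -
    have "(\<Sum>i\<in>UNIV. of_int (k i) *\<^sub>R axis i (1::real)) $ j = (\<Sum>i\<in>UNIV. of_int (k i) * (axis i (1::real) $ j))"
      by (simp add: sum_component)
    also have "\<dots> = (\<Sum>i\<in>UNIV. if i = j then of_int (k j) else 0)"
      by (rule sum.cong) (auto simp: axis_def)
    also have "\<dots> = z $ j" by (simp add: zk)
    finally show ?thesis .
  qed
  have "z = (\<Sum>i\<in>UNIV. of_int (k i) *\<^sub>R axis i 1)"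
    unfolding Finite_Cartesian_Product.vec_eq_iff by (intro allI) (rule comp[symmetric])
  then show "g (v + z) = g v" using fin[of UNIV v] by simp
qed

lemma periodic_bounded:
  fixes g :: "real^'d::finite \<Rightarrow> 'b::real_normed_vector"
  assumes cont: "continuous_on UNIV g" and per: "\<And>v z. (\<And>i. z$i \<in> \<int>) \<Longrightarrow> g (v + z) = g v"
  shows "\<exists>K. \<forall>v. norm (g v) \<le> K"
proof -
  have "compact (g ` cbox 0 (1::real^'d))"
    by (rule compact_continuous_image[OF continuous_on_subset[OF cont] compact_cbox]) simp
  then obtain K where K: "\<And>y. y \<in> g ` cbox 0 (1::real^'d) \<Longrightarrow> norm y \<le> K"
    using compact_imp_bounded bounded_iff by metis
  have "norm (g v) \<le> K" for v
  proof -
    define z :: "real^'d" where "z = (\<chi> i. of_int \<lfloor>v$i\<rfloor>)"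
    have r: "v - z \<in> cbox 0 (1::real^'d)"
    proof -
      have "0 \<le> (v - z)$i \<and> (v - z)$i \<le> 1" for i
      proof -
        have a: "(v - z)$i = v$i - of_int \<lfloor>v$i\<rfloor>" by (simp add: z_def)
        have b: "of_int \<lfloor>v$i\<rfloor> \<le> v$i" "v$i < of_int \<lfloor>v$i\<rfloor> + 1"
          by (rule of_int_floor_le, rule real_of_int_floor_add_one_gt)
        show ?thesis unfolding a using b by linarith
      qed
      then show ?thesis unfolding mem_box_cart by simp
    qed
    have "g v = g ((v - z) + z)" by simp
    also have "\<dots> = g (v - z)" by (rule per) (simp add: z_def)
    finally show ?thesis using K r by auto
  qed
  then show ?thesis by blast
qed

lemma exp_real_deriv:
  "((\<lambda>s::real. exp (c * complex_of_real s)) has_vector_derivative (c * exp (c * complex_of_real s))) (at s)"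
proof -
  have "((\<lambda>z. exp (c * z)) has_field_derivative (c * exp (c * complex_of_real s))) (at (complex_of_real s))"
    by (auto intro!: derivative_eq_intros)
  from has_vector_derivative_real_field[OF this] show ?thesis .
qed

lemma deriv_everywhere:
  fixes F :: "real^'d::finite \<Rightarrow> complex"
  assumes der: "\<And>v. ((\<lambda>t. F (v + t *\<^sub>R w)) has_vector_derivative (\<mu> * F v)) (at 0)"
  shows "((\<lambda>s. F (v + s *\<^sub>R w)) has_vector_derivative (\<mu> * F (v + t *\<^sub>R w))) (at t)"
proof -
  have dsub: "((\<lambda>s::real. s - t) has_vector_derivative 1) (at t)"
    by (auto intro!: derivative_eq_intros)
  have d0: "((\<lambda>s. F ((v + t *\<^sub>R w) + s *\<^sub>R w)) has_vector_derivative (\<mu> * F (v + t *\<^sub>R w))) (at ((\<lambda>s. s - t) t))"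
    using der[of "v + t *\<^sub>R w"] by simp
  have "((\<lambda>s. F ((v + t *\<^sub>R w) + s *\<^sub>R w)) \<circ> (\<lambda>s. s - t) has_vector_derivative 1 *\<^sub>R (\<mu> * F (v + t *\<^sub>R w))) (at t)"
    by (rule vector_diff_chain_at[OF dsub d0])
  moreover have "(\<lambda>s. F ((v + t *\<^sub>R w) + s *\<^sub>R w)) \<circ> (\<lambda>s. s - t) = (\<lambda>s. F (v + s *\<^sub>R w))"
    by (rule ext) (simp add: o_def algebra_simps)
  ultimately show ?thesis by simp
qed

lemma exp_form:
  fixes F :: "real^'d::finite \<Rightarrow> complex"
  assumes der: "\<And>v. ((\<lambda>t. F (v + t *\<^sub>R w)) has_vector_derivative (\<mu> * F v)) (at 0)"
  shows "F (v + t *\<^sub>R w) = exp (\<mu> * complex_of_real t) * F v"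
proof -
  define h where "h = (\<lambda>s. exp (- \<mu> * complex_of_real s) * F (v + s *\<^sub>R w))"
  have "(h has_vector_derivative 0) (at s within UNIV)" for s
  proof -
    have "(h has_vector_derivative (exp (- \<mu> * complex_of_real s) * (\<mu> * F (v + s *\<^sub>R w)) + (- \<mu> * exp (- \<mu> * complex_of_real s)) * F (v + s *\<^sub>R w))) (at s)"
      unfolding h_def
      by (rule has_vector_derivative_mult[OF exp_real_deriv deriv_everywhere[OF der]])
    moreover have "exp (- \<mu> * complex_of_real s) * (\<mu> * F (v + s *\<^sub>R w)) + (- \<mu> * exp (- \<mu> * complex_of_real s)) * F (v + s *\<^sub>R w) = 0"
      by (simp add: algebra_simps)
    ultimately show ?thesis by simp
  qed
  then obtain c where c: "\<And>x. x \<in> UNIV \<Longrightarrow> h x = c"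
    using has_vector_derivative_zero_constant[OF convex_UNIV] by blast
  have "h t = h 0" using c by simp
  then have e1: "exp (- \<mu> * complex_of_real t) * F (v + t *\<^sub>R w) = F v" by (simp add: h_def)
  have e2: "exp (\<mu> * complex_of_real t) * exp (- \<mu> * complex_of_real t) = 1"
    by (simp add: exp_add[symmetric])
  have "F (v + t *\<^sub>R w) = (exp (\<mu> * complex_of_real t) * exp (- \<mu> * complex_of_real t)) * F (v + t *\<^sub>R w)"
    by (simp only: e2 mult_1_left)
  also have "\<dots> = exp (\<mu> * complex_of_real t) * (exp (- \<mu> * complex_of_real t) * F (v + t *\<^sub>R w))"
    by (simp only: mult.assoc)
  also have "\<dots> = exp (\<mu> * complex_of_real t) * F v" by (simp only: e1)
  finally show ?thesis .
qed

lemma scalar_vec: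
  fixes F :: "real^'d::finite \<Rightarrow> complex" and \<omega> :: "'d \<Rightarrow> real"
  assumes wdef: "w = (\<chi> i. \<omega> i)"
    and indep: "rat_indep \<omega>"
    and cont: "continuous_on UNIV F"
    and per: "\<And>v z. (\<And>i. z$i \<in> \<int>) \<Longrightarrow> F (v + z) = F v"
    and der: "\<And>v. ((\<lambda>t. F (v + t *\<^sub>R w)) has_vector_derivative (\<mu> * F v)) (at 0)"
    and nz: "F v0 \<noteq> 0"
  shows "\<mu> \<in> Mset \<omega>"
proof -
  note ef = exp_form[of F w \<mu>, OF der]
  obtain K where K: "\<And>v. norm (F v) \<le> K" using periodic_bounded[OF cont per] by blast
  define c0 where "c0 = norm (F v0)"
  have c0: "c0 > 0" using nz by (simp add: c0_def)
  have normorb: "norm (F (v0 + t *\<^sub>R w)) = exp (Re \<mu> * t) * c0" for t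
    using ef[of v0 t] by (simp add: c0_def norm_mult norm_exp_eq_Re)
  have Re0: "Re \<mu> = 0"
  proof (rule ccontr)
    assume ne: "Re \<mu> \<noteq> 0"
    define t where "t = K / (c0 * Re \<mu>)"
    have "Re \<mu> * t = K / c0" using ne c0 by (simp add: t_def field_simps)
    then have "norm (F (v0 + t *\<^sub>R w)) = exp (K / c0) * c0" using normorb by simp
    also have "\<dots> \<ge> (1 + K / c0) * c0"
      using exp_ge_add_one_self[of "K / c0"] c0 by (intro mult_right_mono) auto
    also have "(1 + K / c0) * c0 = c0 + K" using c0 by (simp add: field_simps)
    finally have "c0 + K \<le> norm (F (v0 + t *\<^sub>R w))" .
    with K[of "v0 + t *\<^sub>R w"] c0 show False by linarith
  qed
  have orbc: "norm (F (v0 + t *\<^sub>R w)) = c0" for t using normorb Re0 by simp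
  have normc: "norm (F v) = c0" for v
  proof (rule ccontr)
    assume ne: "norm (F v) \<noteq> c0"
    define e where "e = \<bar>norm (F v) - c0\<bar>"
    have e: "e > 0" using ne by (simp add: e_def)
    obtain \<delta> where \<delta>: "\<delta> > 0" and d: "\<And>y. dist y v < \<delta> \<Longrightarrow> dist (F y) (F v) < e"
      using cont e unfolding continuous_on_iff by blast
    define N where "N = real CARD('d)"
    have N: "N > 0" by (simp add: N_def)
    obtain t and h :: "'d \<Rightarrow> int" where th: "\<And>i. \<bar>t * \<omega> i - of_int (h i) - (v$i - v0$i)\<bar> < \<delta> / N"
      using kronecker_d[OF indep, of "\<delta> / N" "\<lambda>i. v$i - v0$i"] \<delta> N by auto
    define hz :: "real^'d" where "hz = (\<chi> i. of_int (h i))"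
    define p where "p = (v0 + t *\<^sub>R w) + (- hz)"
    have Fp: "F p = F (v0 + t *\<^sub>R w)" unfolding p_def by (rule per) (simp add: hz_def)
    have comp: "(p - v)$i = t * \<omega> i - of_int (h i) - (v$i - v0$i)" for i
      by (simp add: p_def hz_def wdef algebra_simps)
    have "dist p v \<le> (\<Sum>i\<in>UNIV. \<bar>(p - v)$i\<bar>)" unfolding dist_norm by (rule norm_le_l1_cart)
    also have "\<dots> < (\<Sum>i\<in>(UNIV::'d set). \<delta> / N)"
    proof (rule sum_strict_mono)
      fix i :: 'd show "\<bar>(p - v)$i\<bar> < \<delta> / N" unfolding comp by (rule th)
    qed auto
    also have "\<dots> = \<delta>" using N by (simp add: N_def)
    finally have "dist (F p) (F v) < e" by (rule d)
    moreover have "\<bar>norm (F p) - norm (F v)\<bar> \<le> dist (F p) (F v)"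
      unfolding dist_norm by (rule norm_triangle_ineq3)
    ultimately have "\<bar>norm (F p) - norm (F v)\<bar> < e" by linarith
    then have "\<bar>c0 - norm (F v)\<bar> < e" using Fp orbc by simp
    then show False unfolding e_def by linarith
  qed
  have Fnz: "F v \<noteq> 0" for v using normc[of v] c0 by auto
  have Fnz': "\<And>z. z \<in> UNIV \<Longrightarrow> F z \<noteq> 0" using Fnz by blast
  obtain H where Hc: "continuous_on UNIV H" and FH0: "\<And>x. x \<in> UNIV \<Longrightarrow> F x = exp (H x)"
    using continuous_logarithm_on_contractible[OF cont contractible_UNIV Fnz'] by blast
  have FH: "F x = exp (H x)" for x using FH0 by simp
  define a where "a = (\<lambda>i. H (axis i 1) - H 0)"
  have Hax: "H (v + axis i 1) = H v + a i" for v i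
  proof -
    define D where "D = (\<lambda>v. H (v + axis i 1) - H v)"
    have Dc: "continuous_on UNIV D" unfolding D_def
      by (intro continuous_on_diff Hc continuous_on_compose2[OF Hc] continuous_intros) auto
    have D1: "exp (D v) = 1" for v
    proof -
      have "F (v + axis i 1) = F v" by (rule per) (simp add: axis_def)
      then show ?thesis using Fnz[of v] by (simp add: D_def exp_diff FH[symmetric])
    qed
    have "D v = D 0" by (rule exp1_const[OF connected_UNIV Dc D1]) auto
    then show ?thesis by (simp add: D_def a_def algebra_simps)
  qed
  have aexp: "exp (a i) = 1" for i
  proof -
    have p: "F (0 + axis i 1) = F 0" by (rule per) (simp add: axis_def)
    show ?thesis using p Fnz[of 0] by (simp add: a_def exp_diff FH[symmetric])
  qed
  have Horb: "H (t *\<^sub>R w) = H 0 + \<mu> * complex_of_real t" for t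
  proof -
    define E where "E = (\<lambda>t. H (t *\<^sub>R w) - H 0 - \<mu> * complex_of_real t)"
    have Ec: "continuous_on UNIV E" unfolding E_def
      by (intro continuous_on_diff continuous_on_compose2[OF Hc] continuous_intros) auto
    have E1: "exp (E t) = 1" for t
    proof -
      have "F (0 + t *\<^sub>R w) = exp (\<mu> * complex_of_real t) * F 0" by (rule ef)
      then have "exp (H (t *\<^sub>R w)) = exp (\<mu> * complex_of_real t) * exp (H 0)" by (simp add: FH)
      then show ?thesis by (simp add: E_def exp_diff)
    qed
    have "E t = E 0" by (rule exp1_const[OF connected_UNIV Ec E1]) auto
    then show ?thesis by (simp add: E_def algebra_simps)
  qed
  define G where "G = (\<lambda>v. H v - (\<Sum>i\<in>UNIV. a i * complex_of_real (v$i)))"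
  have Gc: "continuous_on UNIV G" unfolding G_def
    by (intro continuous_on_diff Hc continuous_intros)
  have Gax: "G (v + axis j 1) = G v" for v j
  proof -
    have "(\<Sum>i\<in>UNIV. a i * complex_of_real ((v + axis j 1)$i)) = (\<Sum>i\<in>UNIV. a i * complex_of_real (v$i)) + (\<Sum>i\<in>UNIV. if i = j then a j else 0)"
    proof -
      have "(\<Sum>i\<in>UNIV. a i * complex_of_real ((v + axis j 1)$i)) = (\<Sum>i\<in>UNIV. a i * complex_of_real (v$i) + (if i = j then a j else 0))"
        by (rule sum.cong) (auto simp: axis_def algebra_simps)
      also have "\<dots> = (\<Sum>i\<in>UNIV. a i * complex_of_real (v$i)) + (\<Sum>i\<in>UNIV. if i = j then a j else 0)"
        by (rule sum.distrib)
      finally show ?thesis .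
    qed
    then show ?thesis by (simp add: G_def Hax)
  qed
  obtain K2 where K2: "\<And>v. norm (G v) \<le> K2"
    using periodic_bounded[OF Gc axis_per_int[of G, OF Gax]] by blast
  define s where "s = (\<Sum>i\<in>UNIV. a i * complex_of_real (\<omega> i))"
  have Gorb: "G (t *\<^sub>R w) = G 0 + (\<mu> - s) * complex_of_real t" for t
  proof -
    have "(\<Sum>i\<in>UNIV. a i * complex_of_real ((t *\<^sub>R w)$i)) = s * complex_of_real t"
      by (simp add: s_def wdef sum_distrib_left sum_distrib_right algebra_simps)
    then show ?thesis by (simp add: G_def Horb algebra_simps)
  qed
  have mus: "\<mu> = s"
  proof (rule ccontr)
    assume "\<mu> \<noteq> s"
    then have ns: "norm (\<mu> - s) > 0" by simp
    define t where "t = (2 * K2 + 1) / norm (\<mu> - s)"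
    have K2pos: "K2 \<ge> 0" using K2[of 0] norm_ge_zero[of "G 0"] by linarith
    have tpos: "t \<ge> 0" using ns K2pos by (simp add: t_def)
    have "norm ((\<mu> - s) * complex_of_real t) = norm (\<mu> - s) * \<bar>t\<bar>"
      by (simp only: norm_mult norm_of_real)
    also have "\<dots> = norm (\<mu> - s) * t" using tpos by simp
    also have "\<dots> = 2 * K2 + 1" using ns by (simp add: t_def)
    finally have "norm ((\<mu> - s) * complex_of_real t) = 2 * K2 + 1" .
    moreover have "norm ((\<mu> - s) * complex_of_real t) \<le> norm (G (t *\<^sub>R w)) + norm (G 0)"
    proof -
      have eq: "(\<mu> - s) * complex_of_real t = G (t *\<^sub>R w) - G 0" using Gorb[of t] by simp
      show ?thesis unfolding eq by (rule norm_triangle_ineq4)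
    qed
    ultimately show False using K2[of "t *\<^sub>R w"] K2[of 0] by linarith
  qed
  have "\<forall>i. \<exists>n::int. a i = 2 * \<i> * complex_of_real pi * of_int n"
  proof
    fix i
    obtain n where n: "Re (a i) = 0" "Im (a i) = of_int (2 * n) * pi"
      using aexp[of i] exp_eq_1 by blast
    then have "a i = 2 * \<i> * complex_of_real pi * of_int n"
      by (simp add: complex_eq_iff)
    then show "\<exists>n::int. a i = 2 * \<i> * complex_of_real pi * of_int n" ..
  qed
  then have "\<exists>n. \<forall>i. a i = 2 * \<i> * complex_of_real pi * of_int (n i)" by (rule choice)
  then obtain n where n0: "\<forall>i. a i = 2 * \<i> * complex_of_real pi * of_int (n i)" by blast
  have n: "a i = 2 * \<i> * complex_of_real pi * of_int (n i)" for i using n0 by blast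
  have "\<mu> = 2 * \<i> * complex_of_real pi * complex_of_real (\<Sum>i\<in>UNIV. of_int (n i) * \<omega> i)"
    unfolding mus s_def n by (simp add: sum_distrib_left algebra_simps)
  then show ?thesis unfolding Mset_def by blast
qed

lemma jordan_diag:
  assumes "i < sum_list (map fst n_as)" "k < sum_list (map fst n_as)" "jordan_matrix n_as $$ (i,k) \<noteq> 0"
  shows "jordan_matrix n_as $$ (k,k) = jordan_matrix n_as $$ (i,i)"
  using assms
proof (induction n_as arbitrary: i k)
  case Nil then show ?case by simp
next
  case (Cons na n_as)
  obtain n a where na: "na = (n,a)" by force
  let ?N = "sum_list (map fst n_as)"
  have J: "jordan_matrix (na # n_as) = four_block_mat (jordan_block n a) (0\<^sub>m n ?N) (0\<^sub>m ?N n) (jordan_matrix n_as)"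
    by (simp add: na jordan_matrix_Cons)
  have idx: "jordan_matrix (na # n_as) $$ (x,y) = (if x < n then if y < n then jordan_block n a $$ (x,y) else 0
      else if y < n then 0 else jordan_matrix n_as $$ (x - n, y - n))" if "x < n + ?N" "y < n + ?N" for x y
    unfolding J using that by (subst index_mat_four_block) (auto simp: jordan_block_def)
  have lt: "i < n + ?N" "k < n + ?N" using Cons.prems(1,2) by (auto simp: na)
  show ?case
  proof (cases "i < n")
    case True
    show ?thesis
    proof (cases "k < n")
      case True
      with \<open>i < n\<close> show ?thesis using idx[OF lt(2) lt(2)] idx[OF lt(1) lt(1)] by (simp add: jordan_block_def)
    next
      case False
      with \<open>i < n\<close> show ?thesis using idx[OF lt(1) lt(2)] Cons.prems(3) by simp
    qed
  next
    case False
    show ?thesis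
    proof (cases "k < n")
      case True
      with \<open>\<not> i < n\<close> show ?thesis using idx[OF lt(1) lt(2)] Cons.prems(3) by simp
    next
      case False
      have "jordan_matrix n_as $$ (k - n, k - n) = jordan_matrix n_as $$ (i - n, i - n)"
        using Cons.IH[of "i - n" "k - n"] lt Cons.prems(3) idx[OF lt(1) lt(2)] \<open>\<not> i < n\<close> False by simp
      then show ?thesis using idx[OF lt(2) lt(2)] idx[OF lt(1) lt(1)] \<open>\<not> i < n\<close> False by simp
    qed
  qed
qed

lemma order_prod_linear:
  "order x (prod_list (map (\<lambda>a. [:- a, 1:]) xs)) = length (filter (\<lambda>a. a = x) xs)"
proof (induction xs)
  case Nil then show ?case by simp
next
  case (Cons b xs)
  have nz: "prod_list (map (\<lambda>a. [:- a, 1:]) xs) \<noteq> (0 :: 'a poly)"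
    by (auto simp: prod_list_zero_iff)
  have c: "prod_list (map (\<lambda>a. [:- a, 1:]) (b # xs)) = [:- b, 1:] * prod_list (map (\<lambda>a. [:- a, 1:]) xs)"
    by simp
  have "order x (prod_list (map (\<lambda>a. [:- a, 1:]) (b # xs))) = order x [:- b, 1:] + order x (prod_list (map (\<lambda>a. [:- a, 1:]) xs))"
    unfolding c by (rule order_mult, rule no_zero_divisors[OF _ nz]) simp
  also have "order x [:- b, 1:] = (if b = x then 1 else 0)"
    by (simp add: order_linear')
  finally show ?case using Cons by simp
qed

lemma jnf_facts:
  fixes B :: "complex mat"
  assumes B: "B \<in> carrier_mat n n" and jnf: "in_jordan_nf B"
  shows "upper_triangular B"
    and "\<And>i k. i < n \<Longrightarrow> k < n \<Longrightarrow> B $$ (i,k) \<noteq> 0 \<Longrightarrow> B $$ (k,k) = B $$ (i,i)"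
    and "spectrum B = {B $$ (i,i) | i. i < n}"
    and "\<And>x. alg_mult B x = card {i. i < n \<and> B $$ (i,i) = x}"
proof -
  obtain n_as where Bj: "B = jordan_matrix n_as" using jnf unfolding in_jordan_nf_def by blast
  have nN: "n = sum_list (map fst n_as)" using B Bj by (metis carrier_matD(1) jordan_matrix_dim(1))
  show ut: "upper_triangular B"
    unfolding upper_triangular_def Bj using jordan_matrix_upper_triangular by auto
  show "\<And>i k. i < n \<Longrightarrow> k < n \<Longrightarrow> B $$ (i,k) \<noteq> 0 \<Longrightarrow> B $$ (k,k) = B $$ (i,i)"
    using jordan_diag Bj nN by blast
  have cp: "char_poly B = (\<Prod>a\<leftarrow>diag_mat B. [:- a, 1:])"
    by (rule char_poly_upper_triangular[OF B ut])
  have dm: "diag_mat B = map (\<lambda>i. B $$ (i,i)) [0..<n]" using B unfolding diag_mat_def by simp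
  show "spectrum B = {B $$ (i,i) | i. i < n}"
  proof -
    have "eigenvalue B x \<longleftrightarrow> x \<in> set (diag_mat B)" for x
    proof -
      have "eigenvalue B x \<longleftrightarrow> poly (char_poly B) x = 0" by (rule eigenvalue_root_char_poly[OF B])
      also have "\<dots> \<longleftrightarrow> x \<in> set (diag_mat B)"
        unfolding cp by (force simp: poly_prod_list prod_list_zero_iff image_iff)
      finally show ?thesis .
    qed
    then show ?thesis unfolding spectrum_def dm by fastforce
  qed
  show "alg_mult B x = card {i. i < n \<and> B $$ (i,i) = x}" for x
  proof -
    have "alg_mult B x = length (filter (\<lambda>a. a = x) (diag_mat B))"
      unfolding alg_mult_def cp by (rule order_prod_linear)
    also have "\<dots> = card {i. i < length (diag_mat B) \<and> diag_mat B ! i = x}"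
      by (rule length_filter_conv_card)
    also have "\<dots> = card {i. i < n \<and> B $$ (i,i) = x}"
      unfolding dm by (rule arg_cong[where f=card]) auto
    finally show ?thesis .
  qed
qed

lemma mult_entry:
  assumes "A \<in> carrier_mat n m" "B \<in> carrier_mat m p" "i < n" "j < p"
  shows "(A * B) $$ (i,j) = (\<Sum>c\<in>{0..<m}. A $$ (i,c) * B $$ (c,j))"
  using assms by (auto simp: scalar_prod_def intro!: sum.cong)

lemma mult_vec_entry:
  assumes "A \<in> carrier_mat n m" "v \<in> carrier_vec m" "i < n"
  shows "vec_index (A *\<^sub>v v) i = (\<Sum>c\<in>{0..<m}. A $$ (i,c) * vec_index v c)"
  using assms by (auto simp: scalar_prod_def intro!: sum.cong)

lemma rows_cols_card:
  fixes A V :: "complex mat"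
  assumes A: "A \<in> carrier_mat n n" and V: "V \<in> carrier_mat n n" and AV: "A * V = 1\<^sub>m n"
    and I: "I \<subseteq> {..<n}" and J: "J \<subseteq> {..<n}"
    and supp: "\<And>i j. i \<in> I \<Longrightarrow> j < n \<Longrightarrow> j \<notin> J \<Longrightarrow> A $$ (i,j) = 0"
  shows "card I \<le> card J"
proof (rule ccontr)
  assume "\<not> card I \<le> card J"
  define k where "k = card I"
  define m where "m = card J"
  have mk: "m < k" using \<open>\<not> card I \<le> card J\<close> by (simp add: k_def m_def)
  have fI: "finite I" and fJ: "finite J" using I J finite_subset by auto
  obtain ei where ei: "bij_betw ei {0..<k} I" using ex_bij_betw_nat_finite[OF fI] unfolding k_def by blast
  obtain ej where ej: "bij_betw ej {0..<m} J" using ex_bij_betw_nat_finite[OF fJ] unfolding m_def by blast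
  have eiI: "a < k \<Longrightarrow> ei a \<in> I" for a using ei by (auto simp: bij_betw_def)
  have eiinj: "a < k \<Longrightarrow> b < k \<Longrightarrow> ei a = ei b \<Longrightarrow> a = b" for a b
    using ei by (auto simp: bij_betw_def inj_on_def)
  define P where "P = mat k k (\<lambda>(a,b). if b < m then A $$ (ei a, ej b) else 0)"
  define Q where "Q = mat k k (\<lambda>(a,b). if a < m then V $$ (ej a, ei b) else 0)"
  have P: "P \<in> carrier_mat k k" and Q: "Q \<in> carrier_mat k k" by (auto simp: P_def Q_def)
  have PQ: "P * Q = 1\<^sub>m k"
  proof (rule eq_matI)
    fix a b assume "a < dim_row (1\<^sub>m k)" "b < dim_col (1\<^sub>m k)"
    then have ab: "a < k" "b < k" by auto
    have "(P * Q) $$ (a,b) = (\<Sum>c\<in>{0..<k}. P $$ (a,c) * Q $$ (c,b))"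
      by (rule mult_entry[OF P Q ab])
    also have "\<dots> = (\<Sum>c\<in>{0..<m}. A $$ (ei a, ej c) * V $$ (ej c, ei b))"
    proof -
      have "(\<Sum>c\<in>{0..<k}. P $$ (a,c) * Q $$ (c,b)) = (\<Sum>c\<in>{0..<m}. P $$ (a,c) * Q $$ (c,b))"
        by (rule sum.mono_neutral_right) (use mk ab in \<open>auto simp: P_def Q_def\<close>)
      also have "\<dots> = (\<Sum>c\<in>{0..<m}. A $$ (ei a, ej c) * V $$ (ej c, ei b))"
        by (rule sum.cong) (use mk ab in \<open>auto simp: P_def Q_def\<close>)
      finally show ?thesis .
    qed
    also have "\<dots> = (\<Sum>j\<in>J. A $$ (ei a, j) * V $$ (j, ei b))"
      by (rule sum.reindex_bij_betw[OF ej])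
    also have "\<dots> = (\<Sum>j\<in>{0..<n}. A $$ (ei a, j) * V $$ (j, ei b))"
      by (rule sum.mono_neutral_left) (use J supp eiI ab in auto)
    also have "\<dots> = (A * V) $$ (ei a, ei b)"
      using I eiI ab by (intro mult_entry[OF A V, symmetric]) auto
    also have "\<dots> = (if a = b then 1 else 0)"
    proof -
      have "ei a < n" "ei b < n" using I eiI ab by auto
      then show ?thesis unfolding AV using ab eiinj by auto
    qed
    also have "\<dots> = 1\<^sub>m k $$ (a,b)" using ab by simp
    finally show "(P * Q) $$ (a,b) = 1\<^sub>m k $$ (a,b)" .
  qed (use P Q in auto)
  have "det P = 0"
  proof -
    define v :: "complex Matrix.vec" where "v = unit_vec k (k - 1)"
    have v: "v \<in> carrier_vec k" by (simp add: v_def)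
    have vnz: "v \<noteq> 0\<^sub>v k"
    proof
      assume "v = 0\<^sub>v k"
      then have "vec_index v (k - 1) = 0" using mk by simp
      then show False using mk by (simp add: v_def)
    qed
    have "P *\<^sub>v v = 0\<^sub>v k"
    proof (rule eq_vecI)
      fix a assume "a < dim_vec (0\<^sub>v k)"
      then have a: "a < k" by simp
      have "vec_index (P *\<^sub>v v) a = (\<Sum>c\<in>{0..<k}. P $$ (a,c) * vec_index v c)"
        by (rule mult_vec_entry[OF P v a])
      also have "\<dots> = 0"
        by (rule sum.neutral) (use mk a in \<open>auto simp: P_def v_def\<close>)
      finally show "vec_index (P *\<^sub>v v) a = vec_index (0\<^sub>v k) a" using a by simp
    qed (use P in simp)
    then show ?thesis using det_0_iff_vec_prod_zero[OF P] v vnz by blast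
  qed
  moreover have "det (P * Q) = det P * det Q" by (rule det_mult[OF P Q])
  ultimately have "det (1\<^sub>m k :: complex mat) = 0" using PQ by simp
  then show False by simp
qed

lemma scalar_fun:
  fixes f :: "('d::finite \<Rightarrow> real) \<Rightarrow> complex" and \<omega> :: "'d \<Rightarrow> real"
  assumes indep: "rat_indep \<omega>"
    and cont: "continuous_on UNIV f"
    and per: "\<And>\<theta> (k::'d \<Rightarrow> int). f (\<lambda>i. \<theta> i + of_int (k i)) = f \<theta>"
    and der: "\<And>\<theta>. ((\<lambda>t. f (\<lambda>l. \<theta> l + t * \<omega> l)) has_vector_derivative (\<mu> * f \<theta>)) (at 0)"
    and nz: "f \<theta>0 \<noteq> 0"
  shows "\<mu> \<in> Mset \<omega>"
proof -
  define F where "F = (\<lambda>v::real^'d. f (\<lambda>i. v$i))"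
  define w :: "real^'d" where "w = (\<chi> i. \<omega> i)"
  have cvec: "continuous_on UNIV (\<lambda>v::real^'d. (\<lambda>i. v$i))"
    by (rule continuous_on_coordinatewise_then_product) (intro continuous_on_component continuous_on_id)
  have Fc: "continuous_on UNIV F" unfolding F_def
    by (rule continuous_on_compose2[OF cont cvec]) auto
  have Fp: "F (v + z) = F v" if z: "\<And>i. z$i \<in> \<int>" for v z
  proof -
    have zk: "z$i = of_int \<lfloor>z$i\<rfloor>" for i using z[of i] by (metis Ints_cases floor_of_int)
    have h1: "(\<lambda>i. (v + z)$i) = (\<lambda>i. v$i + of_int (\<lfloor>z$i\<rfloor>))"
      by (rule ext) (simp add: zk[symmetric])
    show ?thesis unfolding F_def h1 by (rule per)
  qed
  have Fd: "((\<lambda>t. F (v + t *\<^sub>R w)) has_vector_derivative (\<mu> * F v)) (at 0)" for v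
  proof -
    have "(\<lambda>t. F (v + t *\<^sub>R w)) = (\<lambda>t. f (\<lambda>l. v$l + t * \<omega> l))"
    proof (rule ext)
      fix t
      have h2: "(\<lambda>l. (v + t *\<^sub>R w)$l) = (\<lambda>l. v$l + t * \<omega> l)" by (rule ext) (simp add: w_def)
      show "F (v + t *\<^sub>R w) = f (\<lambda>l. v$l + t * \<omega> l)" unfolding F_def h2 by (rule refl)
    qed
    then show ?thesis using der[of "\<lambda>i. v$i"] by (simp add: F_def)
  qed
  have Fnz: "F (\<chi> i. \<theta>0 i) \<noteq> 0" using nz by (simp add: F_def vec_lambda_inverse)
  show ?thesis by (rule scalar_vec[OF w_def indep Fc Fp Fd Fnz])
qed

lemma offdiag_zero:
  fixes \<omega> :: "'d::finite \<Rightarrow> real"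
    and U :: "('d \<Rightarrow> real) \<Rightarrow> complex mat"
    and B :: "complex mat"
  assumes indep: "rat_indep \<omega>"
    and U_carrier: "\<And>\<theta>. U \<theta> \<in> carrier_mat n n"
    and U_periodic: "\<And>\<theta> (k::'d \<Rightarrow> int). U (\<lambda>i. \<theta> i + of_int (k i)) = U \<theta>"
    and U_cont: "\<And>i j. i < n \<Longrightarrow> j < n \<Longrightarrow> continuous_on UNIV (\<lambda>\<theta>. U \<theta> $$ (i, j))"
    and B_carrier: "B \<in> carrier_mat n n"
    and ut: "upper_triangular B"
    and dg: "\<And>i k. i < n \<Longrightarrow> k < n \<Longrightarrow> B $$ (i,k) \<noteq> 0 \<Longrightarrow> B $$ (k,k) = B $$ (i,i)"
    and U_eq: "\<And>\<theta> i j. i < n \<Longrightarrow> j < n \<Longrightarrow>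
       ((\<lambda>t::real. U (\<lambda>l. \<theta> l + t * \<omega> l) $$ (i, j)) has_vector_derivative
          ((B * U \<theta> - U \<theta> * map_mat cnj B) $$ (i, j))) (at 0)"
  shows "\<forall>i j. (n - i) + j = m \<longrightarrow> i < n \<longrightarrow> j < n \<longrightarrow> \<not> linked \<omega> (B $$ (i,i)) (B $$ (j,j)) \<longrightarrow> (\<forall>\<theta>. U \<theta> $$ (i,j) = 0)"
proof (induction m rule: less_induct)
  case (less m)
  show ?case
  proof (intro allI impI)
    fix i j \<theta>
    assume mij: "(n - i) + j = m" and i: "i < n" and j: "j < n"
      and nl: "\<not> linked \<omega> (B $$ (i,i)) (B $$ (j,j))"
    define \<mu> where "\<mu> = B $$ (i,i) - cnj (B $$ (j,j))"
    have BU: "(B * U \<theta>') $$ (i,j) = B $$ (i,i) * U \<theta>' $$ (i,j)" for \<theta>'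
    proof -
      have "(B * U \<theta>') $$ (i,j) = (\<Sum>c\<in>{0..<n}. B $$ (i,c) * U \<theta>' $$ (c,j))"
        by (rule mult_entry[OF B_carrier U_carrier i j])
      also have "\<dots> = B $$ (i,i) * U \<theta>' $$ (i,j) + (\<Sum>c\<in>{0..<n} - {i}. B $$ (i,c) * U \<theta>' $$ (c,j))"
        by (rule sum.remove) (use i in auto)
      also have "(\<Sum>c\<in>{0..<n} - {i}. B $$ (i,c) * U \<theta>' $$ (c,j)) = 0"
      proof (rule sum.neutral, intro ballI)
        fix c assume c: "c \<in> {0..<n} - {i}"
        show "B $$ (i,c) * U \<theta>' $$ (c,j) = 0"
        proof (cases "B $$ (i,c) = 0")
          case False
          have "\<not> c < i" using False ut i B_carrier by (auto dest: upper_triangularD)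
          then have ci: "i < c" using c by auto
          have eq: "B $$ (c,c) = B $$ (i,i)" using dg[OF i _ False] c by auto
          have "(n - c) + j < m" using mij ci c by auto
          then have "U \<theta>' $$ (c,j) = 0" using less.IH[of "(n - c) + j"] c j nl eq by auto
          then show ?thesis by simp
        qed simp
      qed
      finally show ?thesis by simp
    qed
    have UB: "(U \<theta>' * map_mat cnj B) $$ (i,j) = U \<theta>' $$ (i,j) * cnj (B $$ (j,j))" for \<theta>'
    proof -
      have MB: "map_mat cnj B \<in> carrier_mat n n" using B_carrier by simp
      have "(U \<theta>' * map_mat cnj B) $$ (i,j) = (\<Sum>c\<in>{0..<n}. U \<theta>' $$ (i,c) * map_mat cnj B $$ (c,j))"
        by (rule mult_entry[OF U_carrier MB i j])
      also have "\<dots> = (\<Sum>c\<in>{0..<n}. U \<theta>' $$ (i,c) * cnj (B $$ (c,j)))"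
        by (rule sum.cong) (use j B_carrier in auto)
      also have "\<dots> = U \<theta>' $$ (i,j) * cnj (B $$ (j,j)) + (\<Sum>c\<in>{0..<n} - {j}. U \<theta>' $$ (i,c) * cnj (B $$ (c,j)))"
        by (rule sum.remove) (use j in auto)
      also have "(\<Sum>c\<in>{0..<n} - {j}. U \<theta>' $$ (i,c) * cnj (B $$ (c,j))) = 0"
      proof (rule sum.neutral, intro ballI)
        fix c assume c: "c \<in> {0..<n} - {j}"
        show "U \<theta>' $$ (i,c) * cnj (B $$ (c,j)) = 0"
        proof (cases "B $$ (c,j) = 0")
          case False
          have "\<not> j < c" using False ut c B_carrier by (auto dest: upper_triangularD)
          then have cj: "c < j" using c by auto
          have eq: "B $$ (j,j) = B $$ (c,c)" using dg[OF _ j False] c by auto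
          have "(n - i) + c < m" using mij cj i by auto
          then have "U \<theta>' $$ (i,c) = 0" using less.IH[of "(n - i) + c"] c i nl eq by auto
          then show ?thesis by simp
        qed simp
      qed
      finally show ?thesis by simp
    qed
    have der: "((\<lambda>t. U (\<lambda>l. \<theta>' l + t * \<omega> l) $$ (i, j)) has_vector_derivative (\<mu> * U \<theta>' $$ (i,j))) (at 0)" for \<theta>'
    proof -
      have "(B * U \<theta>' - U \<theta>' * map_mat cnj B) $$ (i, j) = (B * U \<theta>') $$ (i,j) - (U \<theta>' * map_mat cnj B) $$ (i,j)"
        using i j U_carrier[of \<theta>'] B_carrier by simp
      also have "\<dots> = \<mu> * U \<theta>' $$ (i,j)" unfolding BU UB \<mu>_def by (simp add: algebra_simps)
      finally show ?thesis using U_eq[OF i j, of \<theta>'] by simp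
    qed
    show "U \<theta> $$ (i,j) = 0"
    proof (rule ccontr)
      assume nz: "U \<theta> $$ (i,j) \<noteq> 0"
      have "\<mu> \<in> Mset \<omega>"
        by (rule scalar_fun[OF indep U_cont[OF i j] _ der nz]) (rule arg_cong[OF U_periodic])
      then show False using nl unfolding linked_def \<mu>_def by simp
    qed
  qed
qed

lemma Mset_I: "x = 2 * \<i> * complex_of_real pi * complex_of_real (\<Sum>i\<in>UNIV. of_int (k i) * \<omega> i) \<Longrightarrow> x \<in> Mset \<omega>"
  unfolding Mset_def by blast

lemma M_add: "a \<in> Mset \<omega> \<Longrightarrow> b \<in> Mset \<omega> \<Longrightarrow> a + b \<in> Mset \<omega>"
proof -
  assume "a \<in> Mset \<omega>" "b \<in> Mset \<omega>"
  then obtain k1 k2 where a: "a = 2 * \<i> * complex_of_real pi * complex_of_real (\<Sum>i\<in>UNIV. of_int (k1 i) * \<omega> i)"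
    and b: "b = 2 * \<i> * complex_of_real pi * complex_of_real (\<Sum>i\<in>UNIV. of_int (k2 i) * \<omega> i)"
    unfolding Mset_def by blast
  have "a + b = 2 * \<i> * complex_of_real pi * complex_of_real (\<Sum>i\<in>UNIV. of_int ((\<lambda>i. k1 i + k2 i) i) * \<omega> i)"
    unfolding a b by (simp add: sum.distrib algebra_simps)
  then show ?thesis by (rule Mset_I)
qed

lemma M_uminus: "a \<in> Mset \<omega> \<Longrightarrow> - a \<in> Mset \<omega>"
proof -
  assume "a \<in> Mset \<omega>"
  then obtain k1 where a: "a = 2 * \<i> * complex_of_real pi * complex_of_real (\<Sum>i\<in>UNIV. of_int (k1 i) * \<omega> i)"
    unfolding Mset_def by blast
  have "- a = 2 * \<i> * complex_of_real pi * complex_of_real (\<Sum>i\<in>UNIV. of_int ((\<lambda>i. - k1 i) i) * \<omega> i)"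
    unfolding a by (simp add: sum_negf algebra_simps)
  then show ?thesis by (rule Mset_I)
qed

lemma M_diff: "a \<in> Mset \<omega> \<Longrightarrow> b \<in> Mset \<omega> \<Longrightarrow> a - b \<in> Mset \<omega>"
  using M_add[of a \<omega> "- b"] M_uminus[of b \<omega>] by simp

lemma M_zero: "0 \<in> Mset \<omega>"
proof -
  have "(0::complex) = 2 * \<i> * complex_of_real pi * complex_of_real (\<Sum>i\<in>UNIV. of_int ((\<lambda>i. 0::int) i) * \<omega> i)"
    by simp
  then show ?thesis by (rule Mset_I)
qed

lemma M_cnj: "a \<in> Mset \<omega> \<Longrightarrow> cnj a = - a"
  unfolding Mset_def by (auto simp: complex_eq_iff)

lemma linked_sym: "linked \<omega> a b \<Longrightarrow> linked \<omega> b a"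
proof -
  assume l: "linked \<omega> a b"
  then have m: "a - cnj b \<in> Mset \<omega>" unfolding linked_def .
  have "cnj (a - cnj b) = - (a - cnj b)" by (rule M_cnj[OF m])
  then have "b - cnj a = a - cnj b" by (simp add: complex_eq_iff)
  then show ?thesis using m unfolding linked_def by simp
qed

lemma E_step: "\<alpha> - x \<in> Mset \<omega> \<Longrightarrow> linked \<omega> x y \<Longrightarrow> linked \<omega> \<alpha> y"
  unfolding linked_def using M_add[of "\<alpha> - x" \<omega> "x - cnj y"] by simp

lemma O_step: "linked \<omega> \<alpha> x \<Longrightarrow> linked \<omega> x y \<Longrightarrow> \<alpha> - y \<in> Mset \<omega>"
proof -
  assume a: "linked \<omega> \<alpha> x" and b: "linked \<omega> x y"
  have "linked \<omega> y x" using linked_sym[OF b] .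
  then show ?thesis using a M_diff[of "\<alpha> - cnj x" \<omega> "y - cnj x"] unfolding linked_def by simp
qed

lemma EO_link: "\<alpha> - a \<in> Mset \<omega> \<Longrightarrow> linked \<omega> \<alpha> b \<Longrightarrow> linked \<omega> a b"
  unfolding linked_def using M_diff[of "\<alpha> - cnj b" \<omega> "\<alpha> - a"] by simp

lemma chain_EO:
  assumes "is_chain \<omega> xs" "hd xs = \<alpha>"
  shows "j < length xs \<Longrightarrow> \<alpha> - xs ! j \<in> Mset \<omega> \<or> linked \<omega> \<alpha> (xs ! j)"
proof (induction j)
  case 0
  have "xs ! 0 = \<alpha>" using assms by (cases xs) (auto simp: is_chain_def)
  then show ?case by (simp add: M_zero)
next
  case (Suc j)
  have l: "linked \<omega> (xs ! j) (xs ! Suc j)" using assms(1) Suc.prems unfolding is_chain_def by blast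
  have "\<alpha> - xs ! j \<in> Mset \<omega> \<or> linked \<omega> \<alpha> (xs ! j)" using Suc by simp
  then show ?case using E_step[OF _ l] O_step[OF _ l] by blast
qed

lemma chain_ext:
  assumes b: "b \<in> chain_class \<omega> B \<alpha>" and y: "y \<in> spectrum B" and l: "linked \<omega> b y"
  shows "y \<in> chain_class \<omega> B \<alpha>"
proof -
  obtain xs where xs: "is_chain \<omega> xs" "set xs \<subseteq> spectrum B" "hd xs = \<alpha>" "last xs = b"
    using b unfolding chain_class_def chain_linked_def by blast
  have ne: "xs \<noteq> []" using xs(1) by (simp add: is_chain_def)
  have "is_chain \<omega> (xs @ [y])"
    unfolding is_chain_def
  proof (intro conjI allI impI)
    show "xs @ [y] \<noteq> []" by simp
    fix j assume j: "Suc j < length (xs @ [y])"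
    show "linked \<omega> ((xs @ [y]) ! j) ((xs @ [y]) ! Suc j)"
    proof (cases "Suc j < length xs")
      case True
      then show ?thesis using xs(1) unfolding is_chain_def by (simp add: nth_append)
    next
      case False
      then have jj: "Suc j = length xs" using j by simp
      have "(xs @ [y]) ! j = last xs" using jj[symmetric] ne by (simp add: nth_append last_conv_nth)
      moreover have "(xs @ [y]) ! Suc j = y" using jj by (simp add: nth_append)
      ultimately show ?thesis using l xs(4) by simp
    qed
  qed
  moreover have "set (xs @ [y]) \<subseteq> spectrum B" using xs(2) y by simp
  moreover have "hd (xs @ [y]) = \<alpha>" using ne xs(3) by simp
  moreover have "last (xs @ [y]) = y" by simp
  ultimately show ?thesis using y unfolding chain_class_def chain_linked_def by blast
qed

lemma inv_right:
  fixes A :: "complex mat"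
  assumes Ac: "A \<in> carrier_mat n n" and inv: "invertible_mat A"
  shows "\<exists>V. A * V = 1\<^sub>m n \<and> V \<in> carrier_mat n n"
proof -
  have r: "dim_row A = n" "dim_col A = n" using carrier_matD[OF Ac] by blast+
  from inv obtain V where V1: "inverts_mat A V" and V2: "inverts_mat V A"
    unfolding invertible_mat_def by blast
  have V1': "A * V = 1\<^sub>m n" using V1 r(1) unfolding inverts_mat_def by simp
  have V2': "V * A = 1\<^sub>m (dim_row V)" using V2 unfolding inverts_mat_def .
  have c: "dim_col V = n"
  proof -
    have "dim_col V = dim_col (A * V)" by simp
    also have "\<dots> = n" unfolding V1' by simp
    finally show ?thesis .
  qed
  have rr: "dim_row V = n"
  proof -
    have "dim_row V = dim_col (1\<^sub>m (dim_row V) :: complex mat)" by simp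
    also have "\<dots> = dim_col (V * A)" unfolding V2' ..
    also have "\<dots> = n" using r by simp
    finally show ?thesis .
  qed
  have Vc: "V \<in> carrier_mat n n" by (rule carrier_matI[OF rr c])
  show ?thesis by (intro exI[of _ V] conjI V1' Vc)
qed

theorem lemma2:
  fixes \<omega> :: "'d::finite \<Rightarrow> real"
    and U :: "('d \<Rightarrow> real) \<Rightarrow> complex mat"
    and B :: "complex mat"
    and n :: nat
  assumes indep: "rat_indep \<omega>"
    and U_carrier: "\<And>\<theta>. U \<theta> \<in> carrier_mat n n"
    and U_inv: "\<And>\<theta>. invertible_mat (U \<theta>)"
    and U_periodic: "\<And>\<theta> (k::'d \<Rightarrow> int). U (\<lambda>i. \<theta> i + of_int (k i)) = U \<theta>"
    and U_cont: "\<And>i j. i < n \<Longrightarrow> j < n \<Longrightarrow> continuous_on UNIV (\<lambda>\<theta>. U \<theta> $$ (i, j))"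
    and B_carrier: "B \<in> carrier_mat n n"
    and B_jnf: "in_jordan_nf B"
    and U_eq: "\<And>\<theta> i j. i < n \<Longrightarrow> j < n \<Longrightarrow>
       ((\<lambda>t::real. U (\<lambda>l. \<theta> l + t * \<omega> l) $$ (i, j)) has_vector_derivative
          ((B * U \<theta> - U \<theta> * map_mat cnj B) $$ (i, j))) (at 0)"
  shows "(\<forall>x \<in> spectrum B. \<exists>y \<in> spectrum B. linked \<omega> x y) \<and>
    (\<forall>\<alpha> \<in> spectrum B.
       \<not> (\<exists>xs. is_loop \<omega> xs \<and> set xs \<subseteq> chain_class \<omega> B \<alpha> \<and> odd (length xs - 1)) \<longrightarrow>
       (\<exists>\<Sigma>1 \<Sigma>2. \<Sigma>1 \<union> \<Sigma>2 = chain_class \<omega> B \<alpha> \<and> \<Sigma>1 \<inter> \<Sigma>2 = {} \<and>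
          (\<forall>a \<in> \<Sigma>1. \<forall>b \<in> \<Sigma>2. linked \<omega> a b) \<and>
          (\<Sum>a\<in>\<Sigma>1. alg_mult B a) = (\<Sum>b\<in>\<Sigma>2. alg_mult B b)))"
proof -
  note jf = jnf_facts[OF B_carrier B_jnf]
  define d where "d = (\<lambda>i. B $$ (i,i))"
  have spec: "spectrum B = d ` {..<n}" unfolding jf(3) d_def by auto
  have finspec: "finite (spectrum B)" unfolding spec by simp
  have am: "alg_mult B x = card {i. i < n \<and> d i = x}" for x unfolding d_def by (rule jf(4))
  have OD: "\<forall>i j. (n - i) + j = m \<longrightarrow> i < n \<longrightarrow> j < n \<longrightarrow> \<not> linked \<omega> (B $$ (i,i)) (B $$ (j,j)) \<longrightarrow> (\<forall>\<theta>. U \<theta> $$ (i,j) = 0)" for m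
    by (rule offdiag_zero) (fact indep U_carrier U_periodic U_cont B_carrier jf(1) jf(2) U_eq)+
  have Z: "linked \<omega> (d i) (d j)" if "i < n" "j < n" "U \<theta> $$ (i,j) \<noteq> 0" for i j \<theta>
  proof (rule ccontr)
    assume nl: "\<not> linked \<omega> (d i) (d j)"
    have "U \<theta> $$ (i,j) = 0"
      using OD[of "(n - i) + j", rule_format, OF refl that(1) that(2)]
        nl unfolding d_def by simp
    then show False using that(3) by simp
  qed
  define A where "A = U (\<lambda>_. 0)"
  have Ac: "A \<in> carrier_mat n n" unfolding A_def by (rule U_carrier)
  have "\<exists>V. A * V = 1\<^sub>m n \<and> V \<in> carrier_mat n n"
    by (rule inv_right[OF Ac]) (simp add: A_def U_inv)
  then obtain V where AV: "A * V = 1\<^sub>m n" and Vc: "V \<in> carrier_mat n n" by blast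
  have rownz: "\<exists>j<n. A $$ (i,j) \<noteq> 0" if i: "i < n" for i
  proof (rule ccontr)
    assume "\<not> (\<exists>j<n. A $$ (i,j) \<noteq> 0)"
    then have z: "\<And>j. j < n \<Longrightarrow> A $$ (i,j) = 0" by blast
    have "(A * V) $$ (i,i) = (\<Sum>c\<in>{0..<n}. A $$ (i,c) * V $$ (c,i))"
      by (rule mult_entry[OF Ac Vc i i])
    also have "\<dots> = 0" by (rule sum.neutral) (use z in auto)
    finally show False using AV i by simp
  qed
  have part1: "\<forall>x \<in> spectrum B. \<exists>y \<in> spectrum B. linked \<omega> x y"
  proof
    fix x assume "x \<in> spectrum B"
    then obtain i where i: "i < n" "x = d i" unfolding spec by auto
    obtain j where j: "j < n" "A $$ (i,j) \<noteq> 0" using rownz[OF i(1)] by blast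
    have "linked \<omega> (d i) (d j)" by (rule Z[OF i(1) j(1) j(2)[unfolded A_def]])
    moreover have "d j \<in> spectrum B" unfolding spec using j by auto
    ultimately show "\<exists>y \<in> spectrum B. linked \<omega> x y" using i by blast
  qed
  have sumcard: "(\<Sum>a\<in>S. alg_mult B a) = card {i. i < n \<and> d i \<in> S}" if S: "S \<subseteq> spectrum B" for S
  proof -
    have fS: "finite S" using S finspec finite_subset by blast
    have "(\<Sum>a\<in>S. alg_mult B a) = (\<Sum>a\<in>S. card {i. i < n \<and> d i = a})" by (simp add: am)
    also have "\<dots> = card (\<Union>a\<in>S. {i. i < n \<and> d i = a})"
      by (rule card_UN_disjoint[symmetric]) (use fS in auto)
    also have "(\<Union>a\<in>S. {i. i < n \<and> d i = a}) = {i. i < n \<and> d i \<in> S}" by auto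
    finally show ?thesis .
  qed
  have part2: "\<not> (\<exists>xs. is_loop \<omega> xs \<and> set xs \<subseteq> chain_class \<omega> B \<alpha> \<and> odd (length xs - 1)) \<longrightarrow>
       (\<exists>\<Sigma>1 \<Sigma>2. \<Sigma>1 \<union> \<Sigma>2 = chain_class \<omega> B \<alpha> \<and> \<Sigma>1 \<inter> \<Sigma>2 = {} \<and>
          (\<forall>a \<in> \<Sigma>1. \<forall>b \<in> \<Sigma>2. linked \<omega> a b) \<and>
          (\<Sum>a\<in>\<Sigma>1. alg_mult B a) = (\<Sum>b\<in>\<Sigma>2. alg_mult B b))" if \<alpha>: "\<alpha> \<in> spectrum B" for \<alpha>
  proof
    assume noodd: "\<not> (\<exists>xs. is_loop \<omega> xs \<and> set xs \<subseteq> chain_class \<omega> B \<alpha> \<and> odd (length xs - 1))"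
    define C where "C = chain_class \<omega> B \<alpha>"
    have Csub: "C \<subseteq> spectrum B" unfolding C_def chain_class_def by auto
    define S1 where "S1 = {b \<in> C. \<alpha> - b \<in> Mset \<omega>}"
    define S2 where "S2 = {b \<in> C. linked \<omega> \<alpha> b}"
    have noself: "\<not> linked \<omega> b b" if "b \<in> C" for b
    proof
      assume l: "linked \<omega> b b"
      have "is_loop \<omega> [b, b]" using l by (auto simp: is_loop_def is_chain_def less_Suc_eq)
      moreover have "set [b, b] \<subseteq> C" using that by simp
      moreover have "odd (length [b, b] - 1)" by simp
      ultimately show False using noodd unfolding C_def by blast
    qed
    have EO: "\<alpha> - b \<in> Mset \<omega> \<or> linked \<omega> \<alpha> b" if bC: "b \<in> C" for b
    proof -
      obtain xs where xs: "is_chain \<omega> xs" "hd xs = \<alpha>" "last xs = b"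
        using bC unfolding C_def chain_class_def chain_linked_def by blast
      have ne: "xs \<noteq> []" using xs(1) by (simp add: is_chain_def)
      have bl: "b = xs ! (length xs - 1)" using xs(3) ne by (simp add: last_conv_nth)
      have "\<alpha> - xs ! (length xs - 1) \<in> Mset \<omega> \<or> linked \<omega> \<alpha> (xs ! (length xs - 1))"
        by (rule chain_EO[OF xs(1,2)]) (use ne in simp)
      then show ?thesis using bl by simp
    qed
    have un: "S1 \<union> S2 = C" using EO unfolding S1_def S2_def by blast
    have dis: "S1 \<inter> S2 = {}"
    proof (rule ccontr)
      assume "S1 \<inter> S2 \<noteq> {}"
      then obtain b where b: "b \<in> C" "\<alpha> - b \<in> Mset \<omega>" "linked \<omega> \<alpha> b" unfolding S1_def S2_def by blast
      have "linked \<omega> b b" by (rule EO_link[OF b(2,3)])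
      then show False using noself[OF b(1)] by blast
    qed
    have cross: "\<forall>a \<in> S1. \<forall>b \<in> S2. linked \<omega> a b"
      unfolding S1_def S2_def using EO_link by blast
    define R1 where "R1 = {i. i < n \<and> d i \<in> S1}"
    define R2 where "R2 = {i. i < n \<and> d i \<in> S2}"
    have dspec: "j < n \<Longrightarrow> d j \<in> spectrum B" for j unfolding spec by auto
    have c12: "card R1 \<le> card R2"
    proof (rule rows_cols_card[OF Ac Vc AV])
      show "R1 \<subseteq> {..<n}" "R2 \<subseteq> {..<n}" unfolding R1_def R2_def by auto
      fix i j assume i: "i \<in> R1" and j: "j < n" "j \<notin> R2"
      show "A $$ (i,j) = 0"
      proof (rule ccontr)
        assume nz: "A $$ (i,j) \<noteq> 0"
        have in1: "i < n" "d i \<in> C" "\<alpha> - d i \<in> Mset \<omega>" using i unfolding R1_def S1_def by auto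
        have l: "linked \<omega> (d i) (d j)" by (rule Z[OF in1(1) j(1) nz[unfolded A_def]])
        have "d j \<in> C" using chain_ext[OF in1(2)[unfolded C_def] dspec[OF j(1)] l] unfolding C_def .
        moreover have "linked \<omega> \<alpha> (d j)" by (rule E_step[OF in1(3) l])
        ultimately show False using j unfolding R2_def S2_def by blast
      qed
    qed
    have c21: "card R2 \<le> card R1"
    proof (rule rows_cols_card[OF Ac Vc AV])
      show "R2 \<subseteq> {..<n}" "R1 \<subseteq> {..<n}" unfolding R1_def R2_def by auto
      fix i j assume i: "i \<in> R2" and j: "j < n" "j \<notin> R1"
      show "A $$ (i,j) = 0"
      proof (rule ccontr)
        assume nz: "A $$ (i,j) \<noteq> 0"
        have in2: "i < n" "d i \<in> C" "linked \<omega> \<alpha> (d i)" using i unfolding R2_def S2_def by auto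
        have l: "linked \<omega> (d i) (d j)" by (rule Z[OF in2(1) j(1) nz[unfolded A_def]])
        have "d j \<in> C" using chain_ext[OF in2(2)[unfolded C_def] dspec[OF j(1)] l] unfolding C_def .
        moreover have "\<alpha> - d j \<in> Mset \<omega>" by (rule O_step[OF in2(3) l])
        ultimately show False using j unfolding R1_def S1_def by blast
      qed
    qed
    have "(\<Sum>a\<in>S1. alg_mult B a) = card R1"
      unfolding R1_def by (rule sumcard) (use Csub in \<open>auto simp: S1_def\<close>)
    also have "\<dots> = card R2" using c12 c21 by simp
    also have "\<dots> = (\<Sum>b\<in>S2. alg_mult B b)"
      unfolding R2_def by (rule sumcard[symmetric]) (use Csub in \<open>auto simp: S2_def\<close>)
    finally have eq: "(\<Sum>a\<in>S1. alg_mult B a) = (\<Sum>b\<in>S2. alg_mult B b)" .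
    show "\<exists>\<Sigma>1 \<Sigma>2. \<Sigma>1 \<union> \<Sigma>2 = chain_class \<omega> B \<alpha> \<and> \<Sigma>1 \<inter> \<Sigma>2 = {} \<and>
          (\<forall>a \<in> \<Sigma>1. \<forall>b \<in> \<Sigma>2. linked \<omega> a b) \<and>
          (\<Sum>a\<in>\<Sigma>1. alg_mult B a) = (\<Sum>b\<in>\<Sigma>2. alg_mult B b)"
      by (intro exI[of _ S1] exI[of _ S2] conjI) (rule un[unfolded C_def], rule dis, rule cross, rule eq)
  qed
  show ?thesis by (intro conjI ballI part1 part2)
qed

end
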